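(* Let $\Delta t>0$, $N\in\mathbb{N}$, $t_i=i\,\Delta t$ for $i=0,\dots,N$, and let $U\subseteq\mathbb{R}^m$. Let $f:[0,T]\times\mathbb{R}^n\times U\to\mathbb{R}^n$, $\sigma:[0,T]\times\mathbb{R}^n\to\mathbb{R}^{n\times n}$, $\ell:[0,T]\times\mathbb{R}^n\times U\to\mathbb{R}_+$, $g:\mathbb{R}^n\to\mathbb{R}_+$, and let $\mu_i:\mathbb{R}^n\to U$ ($i=0,\dots,N-1$) be a policy. On a probability space with measure $\widetilde{\mathsf{Q}}$, let $W_0^{\mathsf{Q}},\dots,W_{N-1}^{\mathsf{Q}}$ be mutually independent $\mathcal{N}(0,I_n)$ random vectors, and define $X_0=x_0\in\mathbb{R}^n$ and $$X_{i+1}=X_i+F^\mu_i+\Sigma_i W^{\mathsf{Q}}_i,\qquad F^\mu_i=f(t_i,X_i,\mu_i(X_i))\Delta t,\quad \Sigma_i=\sigma(t_i,X_i)\sqrt{\Delta t}.$$ Let $L^\mu_j=\ell(t_j,X_j,\mu_j(X_j))\Delta t$, let $V^\mu_i$ be the on-policy value function $V^\mu_i(X_i)=\mathbf{E}_{\widetilde{\mathsf{Q}}}[\sum_{j=i}^{N-1}L^\mu_j+g(X_N)\mid X_i]$, $Y_i:=V^\mu_i(X_i)$ and $\Delta Y_i:=Y_{i+1}-Y_i$. Fix $i\in\{0,\dots,N-1\}$ and let $\widetilde V_{i+1}:\mathbb{R}^n\to\mathbb{R}$ be a $C^2$ function (an approximation of $V^\mu_{i+1}$). Set $\overline X_{i+1}:=X_i+F^\mu_i$,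 $$\overline Y_{i+1}:=\widetilde V_{i+1}(\overline X_{i+1}),\quad \overline Z_{i+1}:=\Sigma_i^\top\partial_x\widetilde V_{i+1}(\overline X_{i+1}),\quad \overline M_{i+1}:=\Sigma_i^\top\partial_{xx}\widetilde V_{i+1}(\overline X_{i+1})\Sigma_i,$$ $\widetilde Y_{i+1}:=\overline Y_{i+1}+\overline Z_{i+1}^\top W^{\mathsf{Q}}_i+\tfrac12 W^{\mathsf{Q}\top}_i\overline M_{i+1}W^{\mathsf{Q}}_i$, $\delta^{\mathrm{h.o.t.}}_{i+1}:=\widetilde V_{i+1}(X_{i+1})-\widetilde Y_{i+1}$, $\delta^{\widetilde V}_{i+1}:=V^\mu_{i+1}(X_{i+1})-\widetilde V_{i+1}(X_{i+1})$ and $\delta^{\Delta\widehat Y}_{i+1}:=\delta^{\widetilde V}_{i+1}+\delta^{\mathrm{h.o.t.}}_{i+1}$. Define the estimator $$\Delta\widehat Y_i:=-L^\mu_i+\overline Z_{i+1}^\top W^{\mathsf{Q}}_i+\tfrac12\operatorname{tr}\big(\overline M_{i+1}(W^{\mathsf{Q}}_iW^{\mathsf{Q}\top}_i-I)\big).$$ Then $\Delta\widehat Y_i$ is an unbiased estimator of $\Delta Y_i$, i.e. $\mathbf{E}_{\widetilde{\mathsf{Q}}}[\Delta\widehat Y_i\mid X_i]=\mathbf{E}_{\widetilde{\mathsf{Q}}}[\Delta Y_i\mid X_i]$, and the residual error is $$\Delta Y_i-\Delta\widehat Y_i=\delta^{\Delta\widehat Y}_{i+1}-\mathbf{E}_{\widetilde{\mathsf{Q}}}[\delta^{\Delta\widehat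 Y}_{i+1}\mid X_i].$$
   Context: $T=N\Delta t$. $\partial_x$ denotes the gradient and $\partial_{xx}$ the Hessian with respect to $x$. All random variables whose (conditional) expectations appear are assumed integrable. Note that $W^{\mathsf{Q}}_i$ is independent of $X_i$ (which depends only on $x_0,W^{\mathsf{Q}}_0,\dots,W^{\mathsf{Q}}_{i-1}$). *)

theory Defs
  imports "HOL-Analysis.Analysis" "HOL-Probability.Probability"
begin

fun Xpath :: "real \<Rightarrow> (real \<Rightarrow> real^'n \<Rightarrow> 'u \<Rightarrow> real^'n) \<Rightarrow> (real \<Rightarrow> real^'n \<Rightarrow> real^'n^'n)
   \<Rightarrow> (nat \<Rightarrow> real^'n \<Rightarrow> 'u) \<Rightarrow> real^'n \<Rightarrow> (nat \<Rightarrow> 'a \<Rightarrow> real^'n) \<Rightarrow> nat \<Rightarrow> 'a \<Rightarrow> real^'n" where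
  "Xpath dt f \<sigma> \<mu> x0 W 0 \<omega> = x0"
| "Xpath dt f \<sigma> \<mu> x0 W (Suc i) \<omega> =
     (let x = Xpath dt f \<sigma> \<mu> x0 W i \<omega>
      in x + dt *\<^sub>R f (real i * dt) x (\<mu> i x) + (sqrt dt *\<^sub>R \<sigma> (real i * dt) x) *v W i \<omega>)"

definition cond_exp_given :: "'a measure \<Rightarrow> ('a \<Rightarrow> 'b::topological_space) \<Rightarrow> ('a \<Rightarrow> real) \<Rightarrow> 'a \<Rightarrow> real" where
  "cond_exp_given M X Z = real_cond_exp M (vimage_algebra (space M) X borel) Z"

definition outer :: "real^'n \<Rightarrow> real^'n \<Rightarrow> real^'n^'n" where
  "outer v w = (\<chi> a b. v $ a * w $ b)"

end

theory Submission
  imports Defs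
begin

lemma (in prob_space) cond_exp_indep:
  fixes h :: "'y \<times> 'z \<Rightarrow> real" and S :: "'y measure" and T :: "'z measure"
  assumes Y[measurable]: "Y \<in> measurable M S" and Z[measurable]: "Z \<in> measurable M T"
    and jointA: "distr M S Y \<Otimes>\<^sub>M distr M T Z = distr M (S \<Otimes>\<^sub>M T) (\<lambda>x. (Y x, Z x))"
    and h[measurable]: "h \<in> borel_measurable (S \<Otimes>\<^sub>M T)"
    and int: "integrable M (\<lambda>\<omega>. h (Y \<omega>, Z \<omega>))"
  shows "AE \<omega> in M. real_cond_exp M (vimage_algebra (space M) Y S) (\<lambda>\<omega>. h (Y \<omega>, Z \<omega>)) \<omega>
            = (\<integral>z. h (Y \<omega>, z) \<partial>distr M T Z)"
proof -
  define PY where "PY = distr M S Y"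
  define PZ where "PZ = distr M T Z"
  define F where "F = vimage_algebra (space M) Y S"
  interpret PY: prob_space PY unfolding PY_def by (rule prob_space_distr) simp
  interpret PZ: prob_space PZ unfolding PZ_def by (rule prob_space_distr) simp
  interpret PYZ: pair_sigma_finite PY PZ ..
  have joint: "PY \<Otimes>\<^sub>M PZ = distr M (S \<Otimes>\<^sub>M T) (\<lambda>x. (Y x, Z x))"
    using jointA unfolding PY_def PZ_def by simp
  have sPY: "sets PY = sets S" "space PY = space S" unfolding PY_def by simp_all
  have sPZ: "sets PZ = sets T" "space PZ = space T" unfolding PZ_def by simp_all
  have sPYZ: "sets (PY \<Otimes>\<^sub>M PZ) = sets (S \<Otimes>\<^sub>M T)"
    by (rule sets_pair_measure_cong) (simp_all add: sPY sPZ)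
  have hP[measurable]: "h \<in> borel_measurable (PY \<Otimes>\<^sub>M PZ)"
    using h measurable_cong_sets[OF sPYZ refl] by blast
  have intP: "integrable (PY \<Otimes>\<^sub>M PZ) h"
    unfolding joint by (subst integrable_distr_eq) (simp_all add: int)
  define H where "H y = (\<integral>z. h (y, z) \<partial>PZ)" for y
  have HP[measurable]: "H \<in> borel_measurable PY"
    unfolding H_def by measurable
  have HS[measurable]: "H \<in> borel_measurable S"
    using HP measurable_cong_sets[OF sPY(1) refl] by blast
  have intH: "integrable PY H" unfolding H_def by (rule PYZ.integrable_fst'[OF intP])
  have intHY: "integrable M (\<lambda>\<omega>. H (Y \<omega>))"
    using intH unfolding PY_def by (subst (asm) integrable_distr_eq) simp_all
  have subalg: "subalgebra M F"
    unfolding F_def subalgebra_def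
    by (auto simp: sets_vimage_algebra2 measurable_space[OF Y] intro: measurable_sets[OF Y])
  interpret FS: finite_measure_subalgebra M F
    by unfold_locales (rule subalg)
  have HYF: "(\<lambda>\<omega>. H (Y \<omega>)) \<in> borel_measurable F"
    unfolding F_def
    by (rule measurable_compose[OF measurable_vimage_algebra1 HS]) (simp add: measurable_space[OF Y])
  have "AE \<omega> in M. real_cond_exp M F (\<lambda>\<omega>. h (Y \<omega>, Z \<omega>)) \<omega> = H (Y \<omega>)"
  proof (rule FS.real_cond_exp_charact)
    fix A assume "A \<in> sets F"
    then obtain B where B: "B \<in> sets S" and A: "A = Y -` B \<inter> space M"
      unfolding F_def by (auto simp: sets_vimage_algebra2 measurable_space[OF Y])
    have ind_eq: "\<And>\<omega>. \<omega> \<in> space M \<Longrightarrow> indicator A \<omega> = (indicator B (Y \<omega>) :: real)"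
      unfolding A by (auto split: split_indicator)
    have Bm[measurable]: "B \<in> sets PY" using B sPY by simp
    have Bs[measurable]: "B \<in> sets S" using B by simp
    have int2: "integrable (PY \<Otimes>\<^sub>M PZ) (\<lambda>p. indicator B (fst p) * h p)"
    proof -
      have "integrable (PY \<Otimes>\<^sub>M PZ) (\<lambda>p. indicator (B \<times> space PZ) p *\<^sub>R h p)"
        by (rule integrable_mult_indicator) (simp_all add: intP)
      then show ?thesis
        by (rule iffD1[OF Bochner_Integration.integrable_cong[OF refl], rotated])
           (auto simp: space_pair_measure split: split_indicator)
    qed
    have "(\<integral>\<omega>\<in>A. h (Y \<omega>, Z \<omega>) \<partial>M) = (\<integral>\<omega>. indicator B (Y \<omega>) * h (Y \<omega>, Z \<omega>) \<partial>M)"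
      unfolding set_lebesgue_integral_def by (auto intro!: Bochner_Integration.integral_cong simp: ind_eq)
    also have "\<dots> = (\<integral>p. indicator B (fst p) * h p \<partial>(PY \<Otimes>\<^sub>M PZ))"
      unfolding joint by (subst integral_distr) simp_all
    also have "\<dots> = (\<integral>y. (\<integral>z. indicator B y * h (y, z) \<partial>PZ) \<partial>PY)"
      using PYZ.integral_fst'[OF int2] by simp
    also have "\<dots> = (\<integral>y. indicator B y * H y \<partial>PY)"
      unfolding H_def by simp
    also have "\<dots> = (\<integral>\<omega>. indicator B (Y \<omega>) * H (Y \<omega>) \<partial>M)"
      unfolding PY_def by (subst integral_distr) simp_all
    also have "\<dots> = (\<integral>\<omega>\<in>A. H (Y \<omega>) \<partial>M)"
      unfolding set_lebesgue_integral_def by (auto intro!: Bochner_Integration.integral_cong simp: ind_eq)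
    finally show "(\<integral>\<omega>\<in>A. h (Y \<omega>, Z \<omega>) \<partial>M) = (\<integral>\<omega>\<in>A. H (Y \<omega>) \<partial>M)" .
  qed (simp_all add: int intHY HYF)
  then show ?thesis unfolding F_def H_def PZ_def .
qed


lemma (in prob_space) indep_distr_prod:
  fixes A B :: "'a \<Rightarrow> 'u" and \<phi> :: "'u \<Rightarrow> 'y" and \<psi> :: "'u \<Rightarrow> 'z"
  assumes ind: "indep_var U A V B" and phi[measurable]: "\<phi> \<in> measurable U S"
    and psi[measurable]: "\<psi> \<in> measurable V T"
  shows "distr M S (\<lambda>\<omega>. \<phi> (A \<omega>)) \<Otimes>\<^sub>M distr M T (\<lambda>\<omega>. \<psi> (B \<omega>))
         = distr M (S \<Otimes>\<^sub>M T) (\<lambda>\<omega>. (\<phi> (A \<omega>), \<psi> (B \<omega>)))"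
proof -
  have A[measurable]: "A \<in> measurable M U" using indep_var_rv1[OF ind] .
  have B[measurable]: "B \<in> measurable M V" using indep_var_rv2[OF ind] .
  have j: "distr M U A \<Otimes>\<^sub>M distr M V B = distr M (U \<Otimes>\<^sub>M V) (\<lambda>x. (A x, B x))"
    using ind unfolding indep_var_distribution_eq by simp
  have sf: "sigma_finite_measure (distr (distr M V B) T \<psi>)"
    by (intro prob_space_imp_sigma_finite prob_space.prob_space_distr prob_space_distr) simp_all
  have "distr M S (\<lambda>\<omega>. \<phi> (A \<omega>)) = distr (distr M U A) S \<phi>"
    by (subst distr_distr) (simp_all add: comp_def)
  moreover have "distr M T (\<lambda>\<omega>. \<psi> (B \<omega>)) = distr (distr M V B) T \<psi>"
    by (subst distr_distr) (simp_all add: comp_def)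
  ultimately have "distr M S (\<lambda>\<omega>. \<phi> (A \<omega>)) \<Otimes>\<^sub>M distr M T (\<lambda>\<omega>. \<psi> (B \<omega>))
     = distr (distr M U A \<Otimes>\<^sub>M distr M V B) (S \<Otimes>\<^sub>M T) (\<lambda>(x, y). (\<phi> x, \<psi> y))"
    using pair_measure_distr[of \<phi> "distr M U A" S \<psi> "distr M V B" T] sf by simp
  also have "\<dots> = distr M (S \<Otimes>\<^sub>M T) (\<lambda>\<omega>. (\<phi> (A \<omega>), \<psi> (B \<omega>)))"
    unfolding j by (subst distr_distr) (simp_all add: comp_def)
  finally show ?thesis .
qed

lemma pair_borel_meas:
  fixes a :: "'q \<Rightarrow> 'x::second_countable_topology" and b :: "'q \<Rightarrow> 'y::second_countable_topology"
  assumes "a \<in> borel_measurable Q" "b \<in> borel_measurable Q"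
  shows "(\<lambda>q. (a q, b q)) \<in> borel_measurable Q"
proof -
  have "(\<lambda>q. (a q, b q)) \<in> measurable Q (borel \<Otimes>\<^sub>M borel)"
    using assms by (intro measurable_Pair)
  then show ?thesis by (simp add: borel_prod)
qed

lemma comp3_meas:
  fixes F :: "real \<Rightarrow> 'x::second_countable_topology \<Rightarrow> 'y::second_countable_topology \<Rightarrow> 'z::topological_space"
  assumes F: "(\<lambda>(t, x, u). F t x u) \<in> borel_measurable borel"
    and a: "a \<in> borel_measurable Q" and b: "b \<in> borel_measurable Q" and c: "c \<in> borel_measurable Q"
  shows "(\<lambda>q. F (a q) (b q) (c q)) \<in> borel_measurable Q"
proof -
  have "(\<lambda>q. (a q, b q, c q)) \<in> borel_measurable Q"
    by (intro pair_borel_meas a b c)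
  from measurable_compose[OF this F] show ?thesis by simp
qed

lemma comp2_meas:
  fixes F :: "real \<Rightarrow> 'x::second_countable_topology \<Rightarrow> 'z::topological_space"
  assumes F: "(\<lambda>(t, x). F t x) \<in> borel_measurable borel"
    and a: "a \<in> borel_measurable Q" and b: "b \<in> borel_measurable Q"
  shows "(\<lambda>q. F (a q) (b q)) \<in> borel_measurable Q"
proof -
  have "(\<lambda>q. (a q, b q)) \<in> borel_measurable Q"
    by (intro pair_borel_meas a b)
  from measurable_compose[OF this F] show ?thesis by simp
qed

lemma vec_meas_from:
  fixes F :: "'q \<Rightarrow> 'a::euclidean_space^'n"
  assumes F: "\<And>k. (\<lambda>q. F q $ k) \<in> borel_measurable Q"
  shows "F \<in> borel_measurable Q"
proof (rule borel_measurable_euclidean_space[THEN iffD2], rule ballI)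
  fix b :: "'a^'n" assume "b \<in> Basis"
  then obtain k u where b: "b = axis k u" "u \<in> Basis" by (auto simp: Basis_vec_def)
  have "(\<lambda>q. F q \<bullet> b) = (\<lambda>q. F q $ k \<bullet> u)" by (simp add: b inner_axis)
  then show "(\<lambda>q. F q \<bullet> b) \<in> borel_measurable Q" using F by (simp add: borel_measurable_inner)
qed

lemma vec_nth_meas[measurable]:
  fixes F :: "'q \<Rightarrow> 'a::euclidean_space^'n"
  assumes F: "F \<in> borel_measurable Q"
  shows "(\<lambda>q. F q $ k) \<in> borel_measurable Q"
proof (rule borel_measurable_euclidean_space[THEN iffD2], rule ballI)
  fix u :: 'a assume "u \<in> Basis"
  have "(\<lambda>q. F q \<bullet> axis k u) \<in> borel_measurable Q" using F by (intro borel_measurable_inner) auto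
  then show "(\<lambda>q. F q $ k \<bullet> u) \<in> borel_measurable Q" by (simp add: inner_axis)
qed

lemma mv_meas[measurable]:
  fixes A :: "'q \<Rightarrow> real^'n^'k" and v :: "'q \<Rightarrow> real^'n"
  assumes "A \<in> borel_measurable Q" "v \<in> borel_measurable Q"
  shows "(\<lambda>q. A q *v v q) \<in> borel_measurable Q"
  by (rule vec_meas_from) (use assms in \<open>simp add: matrix_vector_mult_def\<close>)

lemma mm_meas[measurable]:
  fixes A :: "'q \<Rightarrow> real^'n^'k" and B :: "'q \<Rightarrow> real^'l^'n"
  assumes "A \<in> borel_measurable Q" "B \<in> borel_measurable Q"
  shows "(\<lambda>q. A q ** B q) \<in> borel_measurable Q"
  by (intro vec_meas_from) (use assms in \<open>simp add: matrix_matrix_mult_def\<close>)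

lemma transpose_meas[measurable]:
  fixes A :: "'q \<Rightarrow> real^'n^'k"
  assumes "A \<in> borel_measurable Q"
  shows "(\<lambda>q. transpose (A q)) \<in> borel_measurable Q"
  by (intro vec_meas_from) (use assms in \<open>simp add: transpose_def\<close>)

fun Xfr :: "real \<Rightarrow> (real \<Rightarrow> real^'n \<Rightarrow> 'u \<Rightarrow> real^'n) \<Rightarrow> (real \<Rightarrow> real^'n \<Rightarrow> real^'n^'n)
   \<Rightarrow> (nat \<Rightarrow> real^'n \<Rightarrow> 'u) \<Rightarrow> nat \<Rightarrow> real^'n \<Rightarrow> (nat \<Rightarrow> real^'n) \<Rightarrow> nat \<Rightarrow> real^'n" where
  "Xfr dt f \<sigma> \<mu> s x w 0 = x"
| "Xfr dt f \<sigma> \<mu> s x w (Suc m) =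
     (let y = Xfr dt f \<sigma> \<mu> s x w m
      in y + dt *\<^sub>R f (real (s + m) * dt) y (\<mu> (s + m) y) + (sqrt dt *\<^sub>R \<sigma> (real (s + m) * dt) y) *v w (s + m))"

lemma Xpath_Xfr:
  "Xpath dt f \<sigma> \<mu> x0 W (s + m) \<omega> = Xfr dt f \<sigma> \<mu> s (Xpath dt f \<sigma> \<mu> x0 W s \<omega>) (\<lambda>j. W j \<omega>) m"
  by (induction m) (simp_all add: Let_def)

lemma Xfr_cong:
  "(\<And>j. s \<le> j \<Longrightarrow> j < s + m \<Longrightarrow> w j = w' j) \<Longrightarrow> Xfr dt f \<sigma> \<mu> s x w m = Xfr dt f \<sigma> \<mu> s x w' m"
  by (induction m) (simp_all add: Let_def)

definition wof :: "(nat \<times> 'n \<Rightarrow> real) \<Rightarrow> nat \<Rightarrow> real^'n::finite" where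
  "wof r j = (\<chi> k. r (j, k))"

lemma wof_meas:
  fixes r :: "'q \<Rightarrow> nat \<times> 'n::finite \<Rightarrow> real"
  assumes r: "r \<in> measurable Q (PiM I (\<lambda>_. borel))" and j: "{j} \<times> UNIV \<subseteq> I"
  shows "(\<lambda>q. wof (r q) j) \<in> borel_measurable Q"
proof (rule vec_meas_from)
  fix k
  have "(j, k) \<in> I" using j by auto
  then have "(\<lambda>q. r q (j, k)) \<in> borel_measurable Q"
    using measurable_compose[OF r measurable_component_singleton, of "(j,k)"] by simp
  then show "(\<lambda>q. wof (r q) j $ k) \<in> borel_measurable Q" by (simp add: wof_def)
qed

lemma Xfr_meas:
  fixes f :: "real \<Rightarrow> real^'n \<Rightarrow> real^'m \<Rightarrow> real^'n" and \<sigma> :: "real \<Rightarrow> real^'n \<Rightarrow> real^'n^'n"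
    and \<mu> :: "nat \<Rightarrow> real^'n \<Rightarrow> real^'m" and r :: "'q \<Rightarrow> nat \<times> 'n \<Rightarrow> real"
  assumes f_meas: "(\<lambda>(t, x, u). f t x u) \<in> borel_measurable borel"
    and sigma_meas: "(\<lambda>(t, x). \<sigma> t x) \<in> borel_measurable borel"
    and mu_meas: "\<And>j. j < N \<Longrightarrow> \<mu> j \<in> borel_measurable borel"
    and a: "a \<in> borel_measurable Q" and r: "r \<in> measurable Q (PiM I (\<lambda>_. borel))"
  shows "{s..<s+m} \<times> UNIV \<subseteq> I \<Longrightarrow> s + m \<le> N \<Longrightarrow>
    (\<lambda>q. Xfr dt f \<sigma> \<mu> s (a q) (wof (r q)) m) \<in> borel_measurable Q"
proof (induction m)
  case 0 then show ?case using a by simp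
next
  case (Suc m)
  define y where "y q = Xfr dt f \<sigma> \<mu> s (a q) (wof (r q)) m" for q
  have "{s..<s+m} \<times> UNIV \<subseteq> I" using Suc.prems(1) by (auto simp: subset_iff)
  then have y: "y \<in> borel_measurable Q" unfolding y_def using Suc by auto
  have w: "(\<lambda>q. wof (r q) (s + m)) \<in> borel_measurable Q"
    by (rule wof_meas[OF r]) (use Suc.prems in auto)
  have mu: "(\<lambda>q. \<mu> (s + m) (y q)) \<in> borel_measurable Q"
    using measurable_compose[OF y mu_meas] Suc.prems by simp
  have fm: "(\<lambda>q. f (real (s + m) * dt) (y q) (\<mu> (s + m) (y q))) \<in> borel_measurable Q"
    by (rule comp3_meas[OF f_meas _ y mu]) simp
  have sm: "(\<lambda>q. \<sigma> (real (s + m) * dt) (y q)) \<in> borel_measurable Q"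
    by (rule comp2_meas[OF sigma_meas _ y]) simp
  have "(\<lambda>q. y q + dt *\<^sub>R f (real (s + m) * dt) (y q) (\<mu> (s + m) (y q))
          + (sqrt dt *\<^sub>R \<sigma> (real (s + m) * dt) (y q)) *v wof (r q) (s + m)) \<in> borel_measurable Q"
    using y fm sm w by measurable
  then show ?case by (simp add: y_def Let_def)
qed

locale esetup = prob_space M for M :: "'a measure" +
  fixes dt :: real and N :: nat
    and f :: "real \<Rightarrow> real^'n \<Rightarrow> real^'m \<Rightarrow> real^'n"
    and \<sigma> :: "real \<Rightarrow> real^'n \<Rightarrow> real^'n^'n"
    and \<mu> :: "nat \<Rightarrow> real^'n \<Rightarrow> real^'m"
    and W :: "nat \<Rightarrow> 'a \<Rightarrow> real^'n"
    and x0 :: "real^'n"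
  assumes f_meas: "(\<lambda>(t, x, u). f t x u) \<in> borel_measurable borel"
    and sigma_meas: "(\<lambda>(t, x). \<sigma> t x) \<in> borel_measurable borel"
    and mu_meas: "\<And>j. j < N \<Longrightarrow> \<mu> j \<in> borel_measurable borel"
    and W_meas: "\<And>j. j < N \<Longrightarrow> W j \<in> borel_measurable M"
    and W_gauss: "\<And>j k. j < N \<Longrightarrow> distributed M lborel (\<lambda>\<omega>. W j \<omega> $ k) std_normal_density"
    and W_indep: "indep_vars (\<lambda>_. borel) (\<lambda>(j, k) \<omega>. W j \<omega> $ k) ({..<N} \<times> UNIV)"
begin

abbreviation "X \<equiv> Xpath dt f \<sigma> \<mu> x0 W"
definition "comps \<omega> = (\<lambda>(j, k). W j \<omega> $ k)"
definition "past s \<omega> = restrict (comps \<omega>) ({..<s} \<times> UNIV)"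
definition "fut s \<omega> = restrict (comps \<omega>) ({s..<N} \<times> UNIV)"
abbreviation "PP s \<equiv> PiM ({..<s} \<times> (UNIV::'n set)) (\<lambda>_. borel :: real measure)"
abbreviation "PF s \<equiv> PiM ({s..<N} \<times> (UNIV::'n set)) (\<lambda>_. borel :: real measure)"

lemma indep_past_fut:
  assumes "s \<le> N"
  shows "indep_var (PP s) (past s) (PF s) (fut s)"
proof -
  have "indep_var (PP s) (\<lambda>\<omega>. restrict (\<lambda>p. (\<lambda>(j, k) \<omega>. W j \<omega> $ k) p \<omega>) ({..<s} \<times> UNIV))
                  (PF s) (\<lambda>\<omega>. restrict (\<lambda>p. (\<lambda>(j, k) \<omega>. W j \<omega> $ k) p \<omega>) ({s..<N} \<times> UNIV))"
    by (rule indep_var_restrict[OF W_indep]) (use assms in auto)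
  moreover have "(\<lambda>p. (\<lambda>(j, k) \<omega>. W j \<omega> $ k) p \<omega>) = comps \<omega>" for \<omega>
    by (auto simp: comps_def)
  ultimately show ?thesis unfolding past_def fut_def by simp
qed

lemma comp_meas: "j < N \<Longrightarrow> (\<lambda>\<omega>. W j \<omega> $ k) \<in> borel_measurable M"
  using W_meas by measurable

lemma past_meas: "s \<le> N \<Longrightarrow> past s \<in> measurable M (PP s)"
  unfolding past_def comps_def by (intro measurable_restrict) (auto intro: comp_meas)

lemma fut_meas: "fut s \<in> measurable M (PF s)"
  unfolding fut_def comps_def by (intro measurable_restrict) (auto intro: comp_meas)

lemma wof_past: "j < s \<Longrightarrow> wof (past s \<omega>) j = W j \<omega>"
  by (simp add: wof_def past_def comps_def vec_eq_iff)

lemma wof_fut: "s \<le> j \<Longrightarrow> j < N \<Longrightarrow> wof (fut s \<omega>) j = W j \<omega>"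
  by (simp add: wof_def fut_def comps_def vec_eq_iff)

definition "phi s r = Xfr dt f \<sigma> \<mu> 0 x0 (wof r) s"

lemma X_phi: "s \<le> t \<Longrightarrow> X s \<omega> = phi s (past t \<omega>)"
proof -
  assume st: "s \<le> t"
  have "X (0 + s) \<omega> = Xfr dt f \<sigma> \<mu> 0 x0 (\<lambda>j. W j \<omega>) s"
    by (subst Xpath_Xfr) simp
  also have "\<dots> = phi s (past t \<omega>)"
    unfolding phi_def by (rule Xfr_cong) (use st in \<open>auto simp: wof_past\<close>)
  finally show ?thesis by simp
qed

lemma phi_meas: "s \<le> t \<Longrightarrow> t \<le> N \<Longrightarrow> phi s \<in> borel_measurable (PP t)"
  unfolding phi_def
  by (rule Xfr_meas[OF f_meas sigma_meas mu_meas, where N=N and s=0 and m=s and a="\<lambda>_. x0" and r="\<lambda>r. r" and I="{..<t} \<times> UNIV", simplified])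
     (auto simp: subset_iff)

lemma X_meas: "s \<le> N \<Longrightarrow> X s \<in> borel_measurable M"
proof -
  assume s: "s \<le> N"
  have "(\<lambda>\<omega>. phi s (past s \<omega>)) \<in> borel_measurable M"
    using measurable_compose[OF past_meas[OF s] phi_meas[OF order.refl s]] .
  moreover have "(\<lambda>\<omega>. phi s (past s \<omega>)) = X s" using X_phi[of s s] by auto
  ultimately show ?thesis by simp
qed

lemma X_fut: "s \<le> m \<Longrightarrow> m \<le> N \<Longrightarrow> X m \<omega> = Xfr dt f \<sigma> \<mu> s (X s \<omega>) (wof (fut s \<omega>)) (m - s)"
proof -
  assume sm: "s \<le> m" "m \<le> N"
  have "X (s + (m - s)) \<omega> = Xfr dt f \<sigma> \<mu> s (X s \<omega>) (\<lambda>j. W j \<omega>) (m - s)"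
    by (rule Xpath_Xfr)
  also have "\<dots> = Xfr dt f \<sigma> \<mu> s (X s \<omega>) (wof (fut s \<omega>)) (m - s)"
    by (rule Xfr_cong) (use sm in \<open>auto simp: wof_fut\<close>)
  finally show ?thesis using sm by simp
qed

end

context esetup begin

lemma W_int1: "j < N \<Longrightarrow> integrable M (\<lambda>\<omega>. W j \<omega> $ k)"
  using distributed_integrable[OF W_gauss[of j k], of "\<lambda>x. x"] integrable_std_normal_moment[of 1]
  by (simp add: normal_density_nonneg)

lemma W_E1: "j < N \<Longrightarrow> expectation (\<lambda>\<omega>. W j \<omega> $ k) = 0"
  using distributed_integral[OF W_gauss[of j k], of "\<lambda>x. x"] integral_std_normal_moment_odd[of 0]
  by (simp add: normal_density_nonneg)

lemma W_int_sq: "j < N \<Longrightarrow> integrable M (\<lambda>\<omega>. W j \<omega> $ k * W j \<omega> $ k)"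
  using distributed_integrable[OF W_gauss[of j k], of "\<lambda>x. x^2"] integrable_std_normal_moment[of 2]
  by (simp add: normal_density_nonneg power2_eq_square)

lemma W_E_sq: "j < N \<Longrightarrow> expectation (\<lambda>\<omega>. W j \<omega> $ k * W j \<omega> $ k) = 1"
  using distributed_integral[OF W_gauss[of j k], of "\<lambda>x. x^2"] integral_std_normal_moment_even[of 1]
  by (simp add: normal_density_nonneg power2_eq_square)

lemma W_indep2:
  assumes "j < N" "k \<noteq> l"
  shows "indep_var borel (\<lambda>\<omega>. W j \<omega> $ k) borel (\<lambda>\<omega>. W j \<omega> $ l)"
proof -
  let ?X = "\<lambda>(j, k) \<omega>. W j \<omega> $ k"
  have "indep_var (PiM {(j,k)} (\<lambda>_. borel)) (\<lambda>\<omega>. restrict (\<lambda>p. ?X p \<omega>) {(j,k)})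
                  (PiM {(j,l)} (\<lambda>_. borel)) (\<lambda>\<omega>. restrict (\<lambda>p. ?X p \<omega>) {(j,l)})"
    by (rule indep_var_restrict[OF W_indep]) (use assms in auto)
  from indep_var_compose[OF this measurable_component_singleton measurable_component_singleton]
  show ?thesis by (simp add: comp_def)
qed

lemma W_int2: "j < N \<Longrightarrow> integrable M (\<lambda>\<omega>. W j \<omega> $ k * W j \<omega> $ l)"
  by (cases "k = l") (auto intro: W_int_sq indep_var_integrable[OF W_indep2] W_int1)

lemma W_E2: "j < N \<Longrightarrow> expectation (\<lambda>\<omega>. W j \<omega> $ k * W j \<omega> $ l) = (if k = l then 1 else 0)"
  by (cases "k = l") (auto simp: W_E_sq indep_var_lebesgue_integral[OF W_indep2] W_int1 W_E1)

lemma gauss_quad: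
  fixes z :: "real^'n" and A :: "real^'n^'n"
  assumes j: "j < N"
  shows "integrable M (\<lambda>\<omega>. c + z \<bullet> W j \<omega> + 1/2 * (W j \<omega> \<bullet> (A *v W j \<omega>)))"
    "expectation (\<lambda>\<omega>. c + z \<bullet> W j \<omega> + 1/2 * (W j \<omega> \<bullet> (A *v W j \<omega>))) = c + 1/2 * trace A"
proof -
  have eq: "(\<lambda>\<omega>. c + z \<bullet> W j \<omega> + 1/2 * (W j \<omega> \<bullet> (A *v W j \<omega>))) =
     (\<lambda>\<omega>. c + (\<Sum>k\<in>UNIV. z $ k * W j \<omega> $ k) + 1/2 * (\<Sum>k\<in>UNIV. \<Sum>l\<in>UNIV. A $ k $ l * (W j \<omega> $ k * W j \<omega> $ l)))"
    by (auto simp: inner_vec_def matrix_vector_mult_def sum_distrib_left mult.assoc mult.left_commute intro!: ext)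
  have i1: "integrable M (\<lambda>\<omega>. \<Sum>k\<in>UNIV. z $ k * W j \<omega> $ k)"
    using W_int1[OF j] by auto
  have i2: "integrable M (\<lambda>\<omega>. \<Sum>k\<in>UNIV. \<Sum>l\<in>UNIV. A $ k $ l * (W j \<omega> $ k * W j \<omega> $ l))"
    using W_int2[OF j] by auto
  show "integrable M (\<lambda>\<omega>. c + z \<bullet> W j \<omega> + 1/2 * (W j \<omega> \<bullet> (A *v W j \<omega>)))"
    unfolding eq using i1 i2 by auto
  have "expectation (\<lambda>\<omega>. c + (\<Sum>k\<in>UNIV. z $ k * W j \<omega> $ k) + 1/2 * (\<Sum>k\<in>UNIV. \<Sum>l\<in>UNIV. A $ k $ l * (W j \<omega> $ k * W j \<omega> $ l)))
      = c + (\<Sum>k\<in>UNIV. z $ k * expectation (\<lambda>\<omega>. W j \<omega> $ k)) + 1/2 * (\<Sum>k\<in>UNIV. \<Sum>l\<in>UNIV. A $ k $ l * expectation (\<lambda>\<omega>. W j \<omega> $ k * W j \<omega> $ l))"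
    using i1 i2 W_int1[OF j] W_int2[OF j] by (simp add: integral_sum integrable_sum prob_space)
  also have "\<dots> = c + 1/2 * trace A"
    by (simp add: W_E1[OF j] W_E2[OF j] trace_def if_distrib cong: if_cong)
  finally show "expectation (\<lambda>\<omega>. c + z \<bullet> W j \<omega> + 1/2 * (W j \<omega> \<bullet> (A *v W j \<omega>))) = c + 1/2 * trace A"
    unfolding eq .
qed

end

lemma (in prob_space) vimage_subalg:
  assumes Y: "Y \<in> measurable M S"
  shows "subalgebra M (vimage_algebra (space M) Y S)"
  unfolding subalgebra_def
  by (auto simp: sets_vimage_algebra2 measurable_space[OF Y] intro: measurable_sets[OF Y])

lemma (in prob_space) vimage_sfs:
  assumes Y: "Y \<in> measurable M S"
  shows "sigma_finite_subalgebra M (vimage_algebra (space M) Y S)"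
proof -
  interpret FS: finite_measure_subalgebra M "vimage_algebra (space M) Y S"
    by unfold_locales (rule vimage_subalg[OF Y])
  show ?thesis by (rule FS.sigma_finite_subalgebra_axioms)
qed

context esetup begin

lemma gaussC:
  fixes a :: "real^'n \<Rightarrow> real" and z :: "real^'n \<Rightarrow> real^'n" and A :: "real^'n \<Rightarrow> real^'n^'n"
  assumes i: "i < N"
    and [measurable]: "a \<in> borel_measurable borel" "z \<in> borel_measurable borel" "A \<in> borel_measurable borel"
    and int: "integrable M (\<lambda>\<omega>. a (X i \<omega>) + z (X i \<omega>) \<bullet> W i \<omega> + 1/2 * (W i \<omega> \<bullet> (A (X i \<omega>) *v W i \<omega>)))"
  shows "AE \<omega> in M. cond_exp_given M (X i)
            (\<lambda>\<omega>. a (X i \<omega>) + z (X i \<omega>) \<bullet> W i \<omega> + 1/2 * (W i \<omega> \<bullet> (A (X i \<omega>) *v W i \<omega>))) \<omega>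
          = a (X i \<omega>) + 1/2 * trace (A (X i \<omega>))"
proof -
  define h where "h p = a (fst p) + z (fst p) \<bullet> snd p + 1/2 * (snd p \<bullet> (A (fst p) *v snd p))" for p :: "(real^'n) \<times> (real^'n)"
  have hm: "h \<in> borel_measurable (borel \<Otimes>\<^sub>M borel)" unfolding h_def by measurable
  have Xm[measurable]: "X i \<in> borel_measurable M" using X_meas i by simp
  have Wm[measurable]: "W i \<in> borel_measurable M" using W_meas i by simp
  have psi: "(\<lambda>r. wof r i) \<in> borel_measurable (PF i)"
    by (rule wof_meas[where r="\<lambda>r. r", OF measurable_ident_sets[OF refl]]) (use i in auto)
  have j0: "distr M borel (\<lambda>\<omega>. phi i (past i \<omega>)) \<Otimes>\<^sub>M distr M borel (\<lambda>\<omega>. wof (fut i \<omega>) i)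
     = distr M (borel \<Otimes>\<^sub>M borel) (\<lambda>\<omega>. (phi i (past i \<omega>), wof (fut i \<omega>) i))"
    by (rule indep_distr_prod[OF indep_past_fut phi_meas psi]) (use i in auto)
  have e1: "(\<lambda>\<omega>. phi i (past i \<omega>)) = X i" using X_phi[of i i] by auto
  have e2: "(\<lambda>\<omega>. wof (fut i \<omega>) i) = W i" using wof_fut[of i i] i by auto
  have joint: "distr M borel (X i) \<Otimes>\<^sub>M distr M borel (W i) = distr M (borel \<Otimes>\<^sub>M borel) (\<lambda>\<omega>. (X i \<omega>, W i \<omega>))"
  proof -
    have e1': "X i = (\<lambda>\<omega>. phi i (past i \<omega>))" using e1 by simp
    have e3: "\<And>\<omega>. wof (fut i \<omega>) i = W i \<omega>" using wof_fut[of i i] i by simp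
    show ?thesis unfolding e1' using j0 by (simp only: e2 e3)
  qed
  have "AE \<omega> in M. real_cond_exp M (vimage_algebra (space M) (X i) borel) (\<lambda>\<omega>. h (X i \<omega>, W i \<omega>)) \<omega>
            = (\<integral>w. h (X i \<omega>, w) \<partial>distr M borel (W i))"
    by (rule cond_exp_indep[OF Xm Wm joint hm]) (use int in \<open>simp add: h_def\<close>)
  moreover have "(\<integral>w. h (X i \<omega>, w) \<partial>distr M borel (W i)) = a (X i \<omega>) + 1/2 * trace (A (X i \<omega>))" for \<omega>
  proof -
    have "(\<integral>w. h (X i \<omega>, w) \<partial>distr M borel (W i)) = expectation (\<lambda>\<omega>'. h (X i \<omega>, W i \<omega>'))"
      by (rule integral_distr) (simp_all add: h_def)
    also have "\<dots> = a (X i \<omega>) + 1/2 * trace (A (X i \<omega>))"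
      unfolding h_def fst_conv snd_conv by (rule gauss_quad(2)[OF i])
    finally show ?thesis .
  qed
  ultimately show ?thesis unfolding cond_exp_given_def h_def by simp
qed

end

context esetup begin

lemma markov:
  fixes ell :: "real \<Rightarrow> real^'n \<Rightarrow> real^'m \<Rightarrow> real" and g :: "real^'n \<Rightarrow> real"
  assumes i: "i < N" and ell_meas: "(\<lambda>(t, x, u). ell t x u) \<in> borel_measurable borel"
    and g_meas[measurable]: "g \<in> borel_measurable borel"
    and int: "integrable M (\<lambda>\<omega>. (\<Sum>k\<in>{Suc i..<N}. ell (real k * dt) (X k \<omega>) (\<mu> k (X k \<omega>)) * dt) + g (X N \<omega>))"
  shows "AE \<omega> in M. real_cond_exp M (vimage_algebra (space M) (X i) borel)
     (cond_exp_given M (X (Suc i)) (\<lambda>\<omega>. (\<Sum>k\<in>{Suc i..<N}. ell (real k * dt) (X k \<omega>) (\<mu> k (X k \<omega>)) * dt) + g (X N \<omega>))) \<omega>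
   = cond_exp_given M (X i) (\<lambda>\<omega>. (\<Sum>k\<in>{Suc i..<N}. ell (real k * dt) (X k \<omega>) (\<mu> k (X k \<omega>)) * dt) + g (X N \<omega>)) \<omega>"
proof -
  define C where "C \<omega> = (\<Sum>k\<in>{Suc i..<N}. ell (real k * dt) (X k \<omega>) (\<mu> k (X k \<omega>)) * dt) + g (X N \<omega>)" for \<omega>
  define xf where "xf x r m = Xfr dt f \<sigma> \<mu> (Suc i) x (wof r) m" for x r m
  define hC where "hC p = (\<Sum>k\<in>{Suc i..<N}. ell (real k * dt) (xf (fst p) (snd p) (k - Suc i))
        (\<mu> k (xf (fst p) (snd p) (k - Suc i))) * dt) + g (xf (fst p) (snd p) (N - Suc i))"
    for p :: "(real^'n) \<times> (nat \<times> 'n \<Rightarrow> real)"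
  let ?Q = "borel \<Otimes>\<^sub>M PF (Suc i)"
  have xfm: "(\<lambda>p. xf (fst p) (snd p) m) \<in> borel_measurable ?Q" if "m \<le> N - Suc i" for m
    unfolding xf_def
    by (rule Xfr_meas[OF f_meas sigma_meas mu_meas, where a=fst and r=snd and I="{Suc i..<N}\<times>UNIV"])
       (use that i in \<open>auto simp: subset_iff\<close>)
  have hCm[measurable]: "hC \<in> borel_measurable ?Q"
    unfolding hC_def
  proof (intro borel_measurable_add borel_measurable_sum)
    fix k assume k: "k \<in> {Suc i..<N}"
    have x: "(\<lambda>p. xf (fst p) (snd p) (k - Suc i)) \<in> borel_measurable ?Q" using k by (intro xfm) auto
    have m: "(\<lambda>p. \<mu> k (xf (fst p) (snd p) (k - Suc i))) \<in> borel_measurable ?Q"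
      using measurable_compose[OF x mu_meas] k by auto
    show "(\<lambda>p. ell (real k * dt) (xf (fst p) (snd p) (k - Suc i)) (\<mu> k (xf (fst p) (snd p) (k - Suc i))) * dt)
          \<in> borel_measurable ?Q"
      by (intro borel_measurable_times comp3_meas[OF ell_meas _ x m]) auto
  next
    show "(\<lambda>p. g (xf (fst p) (snd p) (N - Suc i))) \<in> borel_measurable ?Q"
      using measurable_compose[OF xfm g_meas] by auto
  qed
  have Ceq: "C \<omega> = hC (X (Suc i) \<omega>, fut (Suc i) \<omega>)" for \<omega>
    unfolding C_def hC_def xf_def
    using X_fut[of "Suc i" _ \<omega>] i by (auto intro!: sum.cong)
  have XSm[measurable]: "X (Suc i) \<in> borel_measurable M" using X_meas i by simp
  have Xm[measurable]: "X i \<in> borel_measurable M" using X_meas i by simp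
  have Wm[measurable]: "W i \<in> borel_measurable M" using W_meas i by simp
  have futm[measurable]: "fut (Suc i) \<in> measurable M (PF (Suc i))" by (rule fut_meas)
  have intC: "integrable M C" using int unfolding C_def .
  have C1: "C = (\<lambda>\<omega>. hC (X (Suc i) \<omega>, fut (Suc i) \<omega>))" using Ceq by auto
  have j1: "distr M borel (\<lambda>\<omega>. phi (Suc i) (past (Suc i) \<omega>)) \<Otimes>\<^sub>M distr M (PF (Suc i)) (\<lambda>\<omega>. fut (Suc i) \<omega>)
     = distr M (borel \<Otimes>\<^sub>M PF (Suc i)) (\<lambda>\<omega>. (phi (Suc i) (past (Suc i) \<omega>), fut (Suc i) \<omega>))"
    by (rule indep_distr_prod[OF indep_past_fut phi_meas measurable_ident_sets[OF refl]]) (use i in auto)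
  have e1: "X (Suc i) = (\<lambda>\<omega>. phi (Suc i) (past (Suc i) \<omega>))" using X_phi[of "Suc i" "Suc i"] by auto
  have joint1: "distr M borel (X (Suc i)) \<Otimes>\<^sub>M distr M (PF (Suc i)) (fut (Suc i))
     = distr M (borel \<Otimes>\<^sub>M PF (Suc i)) (\<lambda>\<omega>. (X (Suc i) \<omega>, fut (Suc i) \<omega>))"
    unfolding e1 using j1 by simp
  have K1: "AE \<omega> in M. real_cond_exp M (vimage_algebra (space M) (X (Suc i)) borel) (\<lambda>\<omega>. hC (X (Suc i) \<omega>, fut (Suc i) \<omega>)) \<omega>
            = (\<integral>r. hC (X (Suc i) \<omega>, r) \<partial>distr M (PF (Suc i)) (fut (Suc i)))"
    by (rule cond_exp_indep[OF XSm futm joint1 hCm]) (use intC in \<open>simp only: C1\<close>)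
  define step where "step p = fst p + dt *\<^sub>R f (real i * dt) (fst p) (\<mu> i (fst p))
       + (sqrt dt *\<^sub>R \<sigma> (real i * dt) (fst p)) *v snd p" for p :: "(real^'n) \<times> (real^'n)"
  have mui: "\<mu> i \<in> borel_measurable borel" using mu_meas i by simp
  have stepm: "step \<in> borel_measurable borel"
  proof -
    have fs: "(fst :: (real^'n) \<times> (real^'n) \<Rightarrow> _) \<in> borel_measurable borel"
      using measurable_fst[of "borel :: (real^'n) measure" "borel :: (real^'n) measure"] by (simp add: borel_prod)
    have sn: "(snd :: (real^'n) \<times> (real^'n) \<Rightarrow> _) \<in> borel_measurable borel"
      using measurable_snd[of "borel :: (real^'n) measure" "borel :: (real^'n) measure"] by (simp add: borel_prod)
    have "(\<lambda>p::(real^'n) \<times> (real^'n). f (real i * dt) (fst p) (\<mu> i (fst p))) \<in> borel_measurable borel"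
      using comp3_meas[OF f_meas borel_measurable_const[of "real i * dt"] fs measurable_compose[OF fs mui]] by simp
    moreover have "(\<lambda>p::(real^'n) \<times> (real^'n). \<sigma> (real i * dt) (fst p)) \<in> borel_measurable borel"
      using comp2_meas[OF sigma_meas borel_measurable_const[of "real i * dt"] fs] by simp
    ultimately show ?thesis unfolding step_def using fs sn by measurable
  qed
  have XS: "X (Suc i) \<omega> = step (X i \<omega>, W i \<omega>)" for \<omega>
    by (simp add: step_def Let_def)
  define h2 where "h2 q = hC (step (fst q), snd q)" for q :: "((real^'n) \<times> (real^'n)) \<times> (nat \<times> 'n \<Rightarrow> real)"
  have C2: "C = (\<lambda>\<omega>. h2 ((X i \<omega>, W i \<omega>), fut (Suc i) \<omega>))"
  proof (rule ext)
    fix \<omega>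
    have "C \<omega> = hC (X (Suc i) \<omega>, fut (Suc i) \<omega>)" by (rule Ceq)
    also have "\<dots> = h2 ((X i \<omega>, W i \<omega>), fut (Suc i) \<omega>)" unfolding h2_def by (simp only: XS fst_conv snd_conv)
    finally show "C \<omega> = h2 ((X i \<omega>, W i \<omega>), fut (Suc i) \<omega>)" .
  qed
  have h2m: "h2 \<in> borel_measurable (borel \<Otimes>\<^sub>M PF (Suc i))"
  proof -
    have "(\<lambda>q. (step (fst q), snd q)) \<in> measurable (borel \<Otimes>\<^sub>M PF (Suc i)) (borel \<Otimes>\<^sub>M PF (Suc i))"
      by (intro measurable_Pair measurable_compose[OF measurable_fst stepm] measurable_snd)
    from measurable_compose[OF this hCm] show ?thesis unfolding h2_def by simp
  qed
  define phi2 where "phi2 r = (phi i r, wof r i)" for r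
  have phi2m: "phi2 \<in> borel_measurable (PP (Suc i))"
    unfolding phi2_def
    by (intro pair_borel_meas phi_meas wof_meas[where r="\<lambda>r. r", OF measurable_ident_sets[OF refl]])
       (use i in auto)
  have j2: "distr M borel (\<lambda>\<omega>. phi2 (past (Suc i) \<omega>)) \<Otimes>\<^sub>M distr M (PF (Suc i)) (\<lambda>\<omega>. fut (Suc i) \<omega>)
     = distr M (borel \<Otimes>\<^sub>M PF (Suc i)) (\<lambda>\<omega>. (phi2 (past (Suc i) \<omega>), fut (Suc i) \<omega>))"
    by (rule indep_distr_prod[OF indep_past_fut phi2m measurable_ident_sets[OF refl]]) (use i in auto)
  have e2: "(\<lambda>\<omega>. (X i \<omega>, W i \<omega>)) = (\<lambda>\<omega>. phi2 (past (Suc i) \<omega>))"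
    using X_phi[of i "Suc i"] wof_past[of i "Suc i"] by (auto simp: phi2_def)
  have YWm[measurable]: "(\<lambda>\<omega>. (X i \<omega>, W i \<omega>)) \<in> borel_measurable M"
    by (intro pair_borel_meas Xm Wm)
  have joint2: "distr M borel (\<lambda>\<omega>. (X i \<omega>, W i \<omega>)) \<Otimes>\<^sub>M distr M (PF (Suc i)) (fut (Suc i))
     = distr M (borel \<Otimes>\<^sub>M PF (Suc i)) (\<lambda>\<omega>. ((X i \<omega>, W i \<omega>), fut (Suc i) \<omega>))"
  proof -
    have e2pt: "\<And>\<omega>. phi2 (past (Suc i) \<omega>) = (X i \<omega>, W i \<omega>)" using e2 by metis
    show ?thesis using j2 by (simp only: e2pt)
  qed
  have K2: "AE \<omega> in M. real_cond_exp M (vimage_algebra (space M) (\<lambda>\<omega>. (X i \<omega>, W i \<omega>)) borel)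
       (\<lambda>\<omega>. h2 ((X i \<omega>, W i \<omega>), fut (Suc i) \<omega>)) \<omega>
            = (\<integral>r. h2 ((X i \<omega>, W i \<omega>), r) \<partial>distr M (PF (Suc i)) (fut (Suc i)))"
    by (rule cond_exp_indep[OF YWm futm joint2 h2m]) (use intC in \<open>simp only: C2\<close>)
  define F0 where "F0 = vimage_algebra (space M) (X i) borel"
  define F1 where "F1 = vimage_algebra (space M) (X (Suc i)) borel"
  define G where "G = vimage_algebra (space M) (\<lambda>\<omega>. (X i \<omega>, W i \<omega>)) borel"
  have GF1: "AE \<omega> in M. real_cond_exp M G C \<omega> = real_cond_exp M F1 C \<omega>"
    using K1 K2 unfolding G_def F1_def C1[symmetric] C2[symmetric] by (auto simp: h2_def step_def Let_def)
  interpret F0: sigma_finite_subalgebra M F0 unfolding F0_def by (rule vimage_sfs) simp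
  interpret F1: sigma_finite_subalgebra M F1 unfolding F1_def by (rule vimage_sfs) simp
  interpret G: sigma_finite_subalgebra M G unfolding G_def by (rule vimage_sfs) simp
  have subG: "subalgebra M G" using G.subalg .
  have XiG: "X i \<in> borel_measurable G"
  proof -
    have fs: "(fst :: (real^'n) \<times> (real^'n) \<Rightarrow> _) \<in> borel_measurable borel"
      using measurable_fst[of "borel :: (real^'n) measure" "borel :: (real^'n) measure"] by (simp add: borel_prod)
    have "(\<lambda>\<omega>. (X i \<omega>, W i \<omega>)) \<in> measurable G borel"
      unfolding G_def by (rule measurable_vimage_algebra1) (auto intro: measurable_space[OF YWm])
    from measurable_compose[OF this fs] show ?thesis by simp
  qed
  have subF0: "subalgebra G F0"
    unfolding subalgebra_def F0_def
    using measurable_sets[OF XiG]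
    by (auto simp: sets_vimage_algebra2 measurable_space[OF Xm] G_def)
  have "AE \<omega> in M. real_cond_exp M F0 (real_cond_exp M F1 C) \<omega> = real_cond_exp M F0 (real_cond_exp M G C) \<omega>"
    by (rule F0.real_cond_exp_cong) (use GF1 in \<open>auto simp: eq_commute\<close>)
  moreover have "AE \<omega> in M. real_cond_exp M F0 (real_cond_exp M G C) \<omega> = real_cond_exp M F0 C \<omega>"
    by (rule F0.real_cond_exp_nested_subalg[OF subG subF0 intC])
  ultimately show ?thesis unfolding cond_exp_given_def F0_def[symmetric] F1_def[symmetric] C_def[symmetric]
    by auto
qed

end

lemma trace_outer:
  fixes A :: "real^'n^'n" and w :: "real^'n"
  shows "trace (A ** (outer w w - mat 1)) = w \<bullet> (A *v w) - trace A"
proof -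
  have "A ** (outer w w - mat 1) = A ** outer w w - A ** mat 1"
    by (simp add: matrix_matrix_mult_def vec_eq_iff sum_subtractf right_diff_distrib)
  then have "A ** (outer w w - mat 1) = A ** outer w w - A" by simp
  moreover have "trace (A ** outer w w) = w \<bullet> (A *v w)"
    by (simp add: trace_def matrix_matrix_mult_def outer_def inner_vec_def matrix_vector_mult_def
                  sum_distrib_left mult_ac)
  ultimately show ?thesis by (simp add: trace_sub)
qed

theorem theorem3p1:
  fixes M :: "'a measure"
    and dt :: real and N :: nat and i :: nat
    and U :: "(real^'m) set"
    and f :: "real \<Rightarrow> real^'n \<Rightarrow> real^'m \<Rightarrow> real^'n"
    and \<sigma> :: "real \<Rightarrow> real^'n \<Rightarrow> real^'n^'n"
    and ell :: "real \<Rightarrow> real^'n \<Rightarrow> real^'m \<Rightarrow> real"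
    and g :: "real^'n \<Rightarrow> real"
    and \<mu> :: "nat \<Rightarrow> real^'n \<Rightarrow> real^'m"
    and W :: "nat \<Rightarrow> 'a \<Rightarrow> real^'n"
    and x0 :: "real^'n"
    and Vt :: "real^'n \<Rightarrow> real"
    and DVt :: "real^'n \<Rightarrow> real^'n"
    and HVt :: "real^'n \<Rightarrow> real^'n^'n"
    and X :: "nat \<Rightarrow> 'a \<Rightarrow> real^'n"
    and L :: "nat \<Rightarrow> 'a \<Rightarrow> real"
    and Y :: "nat \<Rightarrow> 'a \<Rightarrow> real"
    and \<Delta>Y Ybar Ytil \<delta>hot \<delta>V \<delta> \<Delta>Yhat :: "'a \<Rightarrow> real"
    and Xbar Zbar :: "'a \<Rightarrow> real^'n"
    and Mbar :: "'a \<Rightarrow> real^'n^'n"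
  assumes P: "prob_space M"
    and dt_pos: "dt > 0"
    and i_lt: "i < N"
    and mu_U: "\<And>j x. j < N \<Longrightarrow> \<mu> j x \<in> U"
    and ell_nonneg: "\<And>t x u. ell t x u \<ge> 0"
    and g_nonneg: "\<And>x. g x \<ge> 0"
    and f_meas: "(\<lambda>(t, x, u). f t x u) \<in> borel_measurable borel"
    and sigma_meas: "(\<lambda>(t, x). \<sigma> t x) \<in> borel_measurable borel"
    and ell_meas: "(\<lambda>(t, x, u). ell t x u) \<in> borel_measurable borel"
    and g_meas: "g \<in> borel_measurable borel"
    and mu_meas: "\<And>j. j < N \<Longrightarrow> \<mu> j \<in> borel_measurable borel"
    and W_meas: "\<And>j. j < N \<Longrightarrow> W j \<in> borel_measurable M"
    and W_gauss: "\<And>j k. j < N \<Longrightarrow> distributed M lborel (\<lambda>\<omega>. W j \<omega> $ k) std_normal_density"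
    and W_indep: "prob_space.indep_vars M (\<lambda>_. borel) (\<lambda>(j, k) \<omega>. W j \<omega> $ k) ({..<N} \<times> UNIV)"
    and Vt_D: "\<And>x. (Vt has_derivative (\<lambda>h. DVt x \<bullet> h)) (at x)"
    and DVt_D: "\<And>x. (DVt has_derivative (\<lambda>h. HVt x *v h)) (at x)"
    and HVt_cont: "continuous_on UNIV HVt"
    and X_def: "X \<equiv> Xpath dt f \<sigma> \<mu> x0 W"
    and L_def: "L \<equiv> (\<lambda>j \<omega>. ell (real j * dt) (X j \<omega>) (\<mu> j (X j \<omega>)) * dt)"
    and Y_def: "Y \<equiv> (\<lambda>j. cond_exp_given M (X j) (\<lambda>\<omega>. (\<Sum>k\<in>{j..<N}. L k \<omega>) + g (X N \<omega>)))"
    and \<Delta>Y_def: "\<Delta>Y \<equiv> (\<lambda>\<omega>. Y (Suc i) \<omega> - Y i \<omega>)"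
    and Xbar_def: "Xbar \<equiv> (\<lambda>\<omega>. X i \<omega> + dt *\<^sub>R f (real i * dt) (X i \<omega>) (\<mu> i (X i \<omega>)))"
    and Ybar_def: "Ybar \<equiv> (\<lambda>\<omega>. Vt (Xbar \<omega>))"
    and Zbar_def: "Zbar \<equiv> (\<lambda>\<omega>. transpose (sqrt dt *\<^sub>R \<sigma> (real i * dt) (X i \<omega>))
                      *v DVt (Xbar \<omega>))"
    and Mbar_def: "Mbar \<equiv> (\<lambda>\<omega>. transpose (sqrt dt *\<^sub>R \<sigma> (real i * dt) (X i \<omega>))
                      ** HVt (Xbar \<omega>)
                      ** (sqrt dt *\<^sub>R \<sigma> (real i * dt) (X i \<omega>)))"
    and Ytil_def: "Ytil \<equiv> (\<lambda>\<omega>. Ybar \<omega> + Zbar \<omega> \<bullet> W i \<omega> + (1/2) * (W i \<omega> \<bullet> (Mbar \<omega> *v W i \<omega>)))"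
    and \<delta>hot_def: "\<delta>hot \<equiv> (\<lambda>\<omega>. Vt (X (Suc i) \<omega>) - Ytil \<omega>)"
    and \<delta>V_def: "\<delta>V \<equiv> (\<lambda>\<omega>. Y (Suc i) \<omega> - Vt (X (Suc i) \<omega>))"
    and \<delta>_def: "\<delta> \<equiv> (\<lambda>\<omega>. \<delta>V \<omega> + \<delta>hot \<omega>)"
    and \<Delta>Yhat_def: "\<Delta>Yhat \<equiv> (\<lambda>\<omega>. - L i \<omega> + Zbar \<omega> \<bullet> W i \<omega>
                      + (1/2) * trace (Mbar \<omega> ** (outer (W i \<omega>) (W i \<omega>) - mat 1)))"
    and int_cost: "\<And>j. j \<in> {i, Suc i} \<Longrightarrow>
                    integrable M (\<lambda>\<omega>. (\<Sum>k\<in>{j..<N}. L k \<omega>) + g (X N \<omega>))"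
    and int_\<Delta>Y: "integrable M \<Delta>Y"
    and int_\<Delta>Yhat: "integrable M \<Delta>Yhat"
    and int_\<delta>: "integrable M \<delta>"
  shows "(AE \<omega> in M. cond_exp_given M (X i) \<Delta>Yhat \<omega> = cond_exp_given M (X i) \<Delta>Y \<omega>)
       \<and> (AE \<omega> in M. \<Delta>Y \<omega> - \<Delta>Yhat \<omega> = \<delta> \<omega> - cond_exp_given M (X i) \<delta> \<omega>)"
proof -
  interpret E: esetup M dt N f \<sigma> \<mu> W x0
    using P f_meas sigma_meas mu_meas W_meas W_gauss W_indep by (simp add: esetup_def esetup_axioms_def)
  define F0 where "F0 = vimage_algebra (space M) (X i) borel"
  have Xi_m[measurable]: "X i \<in> borel_measurable M" unfolding X_def using E.X_meas i_lt by simp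
  have XS_m[measurable]: "X (Suc i) \<in> borel_measurable M" unfolding X_def using E.X_meas i_lt by simp
  have Wi_m[measurable]: "W i \<in> borel_measurable M" using W_meas i_lt by simp
  interpret F0: sigma_finite_subalgebra M F0 unfolding F0_def by (rule E.vimage_sfs) simp
  define C where "C j \<omega> = (\<Sum>k\<in>{j..<N}. L k \<omega>) + g (X N \<omega>)" for j \<omega>
  have intCi: "integrable M (C i)" using int_cost[of i] unfolding C_def by simp
  have intCS: "integrable M (C (Suc i))" using int_cost[of "Suc i"] unfolding C_def by simp
  have Csplit: "C i = (\<lambda>\<omega>. L i \<omega> + C (Suc i) \<omega>)"
    by (rule ext) (simp add: C_def sum.atLeast_Suc_lessThan[OF i_lt])
  have Ldiff: "L i = (\<lambda>\<omega>. C i \<omega> - C (Suc i) \<omega>)" using Csplit by (simp add: fun_eq_iff)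
  have intL: "integrable M (L i)" unfolding Ldiff using intCi intCS by simp
  have mui: "\<mu> i \<in> borel_measurable borel" using mu_meas i_lt by simp
  define lf where "lf x = ell (real i * dt) x (\<mu> i x) * dt" for x
  have lfm: "lf \<in> borel_measurable borel"
    unfolding lf_def
    by (intro borel_measurable_times comp3_meas[OF ell_meas _ measurable_ident_sets[OF refl] mui]) simp_all
  have LF0: "L i \<in> borel_measurable F0"
  proof -
    have "L i = (\<lambda>\<omega>. lf (X i \<omega>))" unfolding L_def lf_def by simp
    moreover have "(\<lambda>\<omega>. lf (X i \<omega>)) \<in> borel_measurable F0"
      unfolding F0_def by (rule measurable_compose[OF measurable_vimage_algebra1 lfm]) simp
    ultimately show ?thesis by simp
  qed
  have Yi_eq: "Y i = real_cond_exp M F0 (C i)" unfolding Y_def C_def F0_def cond_exp_given_def ..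
  have YS_eq: "Y (Suc i) = cond_exp_given M (X (Suc i)) (C (Suc i))" unfolding Y_def C_def ..
  have Yi: "AE \<omega> in M. Y i \<omega> = L i \<omega> + real_cond_exp M F0 (C (Suc i)) \<omega>"
    using F0.real_cond_exp_add[OF intL intCS] F0.real_cond_exp_F_meas[OF intL LF0]
    unfolding Yi_eq Csplit by auto
  have CS_form: "C (Suc i) = (\<lambda>\<omega>. (\<Sum>k\<in>{Suc i..<N}. ell (real k * dt) (E.X k \<omega>) (\<mu> k (E.X k \<omega>)) * dt) + g (E.X N \<omega>))"
    unfolding C_def L_def X_def by simp
  have Mk: "AE \<omega> in M. real_cond_exp M F0 (Y (Suc i)) \<omega> = real_cond_exp M F0 (C (Suc i)) \<omega>"
    using E.markov[OF i_lt ell_meas g_meas intCS[unfolded CS_form]]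
    unfolding YS_eq CS_form F0_def cond_exp_given_def X_def .
  define xb where "xb x = x + dt *\<^sub>R f (real i * dt) x (\<mu> i x)" for x
  define sg where "sg x = sqrt dt *\<^sub>R \<sigma> (real i * dt) x" for x
  define a where "a x = Vt (xb x)" for x
  define z where "z x = transpose (sg x) *v DVt (xb x)" for x
  define A where "A x = transpose (sg x) ** HVt (xb x) ** sg x" for x
  have Ytil_eq: "Ytil = (\<lambda>\<omega>. a (X i \<omega>) + z (X i \<omega>) \<bullet> W i \<omega> + 1/2 * (W i \<omega> \<bullet> (A (X i \<omega>) *v W i \<omega>)))"
    unfolding Ytil_def Ybar_def Zbar_def Mbar_def Xbar_def a_def z_def A_def xb_def sg_def by simp
  have Vt_c: "continuous_on UNIV Vt"
    using Vt_D has_derivative_continuous continuous_at_imp_continuous_on by blast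
  have DVt_c: "continuous_on UNIV DVt"
    using DVt_D has_derivative_continuous continuous_at_imp_continuous_on by blast
  have Vt_m[measurable]: "Vt \<in> borel_measurable borel" by (rule borel_measurable_continuous_onI[OF Vt_c])
  have DVt_m[measurable]: "DVt \<in> borel_measurable borel" by (rule borel_measurable_continuous_onI[OF DVt_c])
  have HVt_m[measurable]: "HVt \<in> borel_measurable borel" by (rule borel_measurable_continuous_onI[OF HVt_cont])
  have fm: "(\<lambda>x. f (real i * dt) x (\<mu> i x)) \<in> borel_measurable borel"
    by (rule comp3_meas[OF f_meas _ measurable_ident_sets[OF refl] mui]) simp
  have xb_m[measurable]: "xb \<in> borel_measurable borel" unfolding xb_def using fm by measurable
  have sg_m[measurable]: "sg \<in> borel_measurable borel"
  proof -
    have "(\<lambda>x. \<sigma> (real i * dt) x) \<in> borel_measurable borel"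
      by (rule comp2_meas[OF sigma_meas _ measurable_ident_sets[OF refl]]) simp
    then show ?thesis unfolding sg_def by measurable
  qed
  have a_m: "a \<in> borel_measurable borel" unfolding a_def by measurable
  have z_m: "z \<in> borel_measurable borel" unfolding z_def by measurable
  have A_m: "A \<in> borel_measurable borel" unfolding A_def by measurable
  have intYS: "integrable M (Y (Suc i))"
    unfolding YS_eq cond_exp_given_def
    by (rule sigma_finite_subalgebra.real_cond_exp_int(1)[OF E.vimage_sfs[OF XS_m] intCS])
  have \<delta>_eq: "\<delta> = (\<lambda>\<omega>. Y (Suc i) \<omega> - Ytil \<omega>)"
    unfolding \<delta>_def \<delta>V_def \<delta>hot_def by (simp add: fun_eq_iff)
  have Ytil_alt: "Ytil = (\<lambda>\<omega>. Y (Suc i) \<omega> - \<delta> \<omega>)" unfolding \<delta>_eq by simp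
  have intYtil: "integrable M Ytil" unfolding Ytil_alt using intYS int_\<delta> by simp
  have Gs: "AE \<omega> in M. real_cond_exp M F0 Ytil \<omega> = a (X i \<omega>) + 1/2 * trace (A (X i \<omega>))"
    using E.gaussC[OF i_lt a_m z_m A_m intYtil[unfolded Ytil_eq X_def]]
    unfolding Ytil_eq F0_def cond_exp_given_def X_def .
  have Dl: "AE \<omega> in M. real_cond_exp M F0 \<delta> \<omega> = real_cond_exp M F0 (Y (Suc i)) \<omega> - real_cond_exp M F0 Ytil \<omega>"
    unfolding \<delta>_eq by (rule F0.real_cond_exp_diff[OF intYS intYtil])
  have Dl2: "AE \<omega> in M. real_cond_exp M F0 \<delta> \<omega> = Y i \<omega> - L i \<omega> - a (X i \<omega>) - 1/2 * trace (A (X i \<omega>))"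
    using Dl Gs Mk Yi by auto
  have pw: "\<Delta>Y \<omega> - \<Delta>Yhat \<omega> = \<delta> \<omega> + L i \<omega> + a (X i \<omega>) + 1/2 * trace (A (X i \<omega>)) - Y i \<omega>" for \<omega>
  proof -
    have "Zbar \<omega> = z (X i \<omega>)" "Mbar \<omega> = A (X i \<omega>)"
      unfolding Zbar_def Mbar_def z_def A_def Xbar_def xb_def sg_def by simp_all
    then have "\<Delta>Yhat \<omega> = - L i \<omega> + z (X i \<omega>) \<bullet> W i \<omega> + 1/2 * (W i \<omega> \<bullet> (A (X i \<omega>) *v W i \<omega>) - trace (A (X i \<omega>)))"
      unfolding \<Delta>Yhat_def by (simp add: trace_outer)
    moreover have "\<delta> \<omega> = Y (Suc i) \<omega> - (a (X i \<omega>) + z (X i \<omega>) \<bullet> W i \<omega> + 1/2 * (W i \<omega> \<bullet> (A (X i \<omega>) *v W i \<omega>)))"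
      unfolding \<delta>_eq Ytil_eq by simp
    ultimately show ?thesis unfolding \<Delta>Y_def by (simp add: algebra_simps)
  qed
  have part2: "AE \<omega> in M. \<Delta>Y \<omega> - \<Delta>Yhat \<omega> = \<delta> \<omega> - cond_exp_given M (X i) \<delta> \<omega>"
    using Dl2 unfolding cond_exp_given_def F0_def[symmetric] by (auto simp: pw)
  have ED_int: "integrable M (real_cond_exp M F0 \<delta>)" by (rule F0.real_cond_exp_int(1)[OF int_\<delta>])
  have ED_F0: "real_cond_exp M F0 \<delta> \<in> borel_measurable F0" by (rule borel_measurable_cond_exp)
  have ED_M: "real_cond_exp M F0 \<delta> \<in> borel_measurable M" by (rule borel_measurable_cond_exp2)
  have m1[measurable]: "\<Delta>Y \<in> borel_measurable M" using int_\<Delta>Y by (rule borel_measurable_integrable)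
  have m2[measurable]: "\<Delta>Yhat \<in> borel_measurable M" using int_\<Delta>Yhat by (rule borel_measurable_integrable)
  have m3[measurable]: "\<delta> \<in> borel_measurable M" using int_\<delta> by (rule borel_measurable_integrable)
  have int_d: "integrable M (\<lambda>\<omega>. \<Delta>Y \<omega> - \<delta> \<omega>)" using int_\<Delta>Y int_\<delta> by simp
  have AEhat: "AE \<omega> in M. \<Delta>Yhat \<omega> = (\<Delta>Y \<omega> - \<delta> \<omega>) + real_cond_exp M F0 \<delta> \<omega>"
    using part2 unfolding cond_exp_given_def F0_def[symmetric] by auto
  have s1: "AE \<omega> in M. real_cond_exp M F0 \<Delta>Yhat \<omega> = real_cond_exp M F0 (\<lambda>\<omega>. (\<Delta>Y \<omega> - \<delta> \<omega>) + real_cond_exp M F0 \<delta> \<omega>) \<omega>"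
    by (rule F0.real_cond_exp_cong[OF AEhat]) (use ED_M in simp_all)
  have s2: "AE \<omega> in M. real_cond_exp M F0 (\<lambda>\<omega>. (\<Delta>Y \<omega> - \<delta> \<omega>) + real_cond_exp M F0 \<delta> \<omega>) \<omega>
      = real_cond_exp M F0 (\<lambda>\<omega>. \<Delta>Y \<omega> - \<delta> \<omega>) \<omega> + real_cond_exp M F0 (real_cond_exp M F0 \<delta>) \<omega>"
    by (rule F0.real_cond_exp_add[OF int_d ED_int])
  have s3: "AE \<omega> in M. real_cond_exp M F0 (\<lambda>\<omega>. \<Delta>Y \<omega> - \<delta> \<omega>) \<omega> = real_cond_exp M F0 \<Delta>Y \<omega> - real_cond_exp M F0 \<delta> \<omega>"
    by (rule F0.real_cond_exp_diff[OF int_\<Delta>Y int_\<delta>])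
  have s4: "AE \<omega> in M. real_cond_exp M F0 (real_cond_exp M F0 \<delta>) \<omega> = real_cond_exp M F0 \<delta> \<omega>"
    by (rule F0.real_cond_exp_F_meas[OF ED_int ED_F0])
  have part1: "AE \<omega> in M. cond_exp_given M (X i) \<Delta>Yhat \<omega> = cond_exp_given M (X i) \<Delta>Y \<omega>"
    using s1 s2 s3 s4 unfolding cond_exp_given_def F0_def[symmetric] by auto
  show ?thesis using part1 part2 by blast
qed

end
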